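(* Let $\mathbf a:\mathbb R^D\to\mathcal H$ define a dictionary $\mathcal A=\{\mathbf a(\theta):\theta\in\mathbb R^D\}$ in a real Hilbert space $\mathcal H$ whose kernel $\kappa$ is admissible, and let $\mathcal S^\star=\{\theta^\star_\ell\}_{\ell=1}^k\subset\mathbb R^D$ (pairwise distinct) be admissible with respect to $\kappa$. Then for every subset $\mathcal S\subseteq\mathcal S^\star$, OMP achieves exact $\mathrm{card}(\mathcal S)$-step recovery of $\mathcal S$.
   Context: Kernel: $\kappa(\theta,\theta')=\langle\mathbf a(\theta),\mathbf a(\theta')\rangle$. The kernel is admissible if: (i) $\kappa(\theta,\theta)=1$ for all $\theta$; $\lim_{\theta'\to\theta}\kappa(\theta,\theta')=1$ for all $\theta$; for every $\varepsilon>0$ and $\theta$ there is a compact $K$ with $\sup_{\theta'\notin K}\kappa(\theta',\theta)<\varepsilon$; (ii) $0\le\kappa(\theta,\theta')<1$ whenever $\theta\ne\theta'$. A support $\mathcal S^\star=\{\theta^\star_\ell\}_{\ell=1}^k$ is admissible with respect to $\kappa$ if for every nonempty $T\subseteq\{1,\dots,k\}$ and every positive reals $\{c_\ell\}_{\ell\in T}$ with $\sum_{\ell\in T}c_\ell<1$, setting $\psi(\theta)=\sum_{\ell\in T}c_\ell\kappa(\theta,\theta^\star_\ell)$: (i) the set of global maximizers of $\psi$ over $\mathbb R^D$ is contained in $\{\theta^\star_\ell\}_{\ell\in T}$; (ii) if $\ell\in\{1,\dots,k\}\setminus T$ satisfies $\psi(\theta)-\kappa(\theta,\theta^\star_\ell)\le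 0$ for all $\theta\in\{\theta^\star_{\ell'}\}_{\ell'\in T}$, then $\psi(\theta)-\kappa(\theta,\theta^\star_\ell)\le0$ for all $\theta\in\mathbb R^D$. OMP with input $\mathbf y\in\mathcal H$: set $\mathbf r=\mathbf y$, $\widehat{\mathcal S}=\emptyset$, $t=0$; while $\mathbf r\ne 0$: $t\leftarrow t+1$; choose any $\widehat\theta_t\in\arg\max_{\theta}|\langle\mathbf a(\theta),\mathbf r\rangle|$; $\widehat{\mathcal S}\leftarrow\widehat{\mathcal S}\cup\{\widehat\theta_t\}$; compute $(\widehat c_1,\dots,\widehat c_t)\in\arg\min_{c\in\mathbb R^t}\|\mathbf y-\sum_{\ell=1}^t c_\ell\mathbf a(\widehat\theta_\ell)\|$; set $\mathbf r=\mathbf y-\sum_{\ell=1}^t\widehat c_\ell\mathbf a(\widehat\theta_\ell)$. Output $\widehat{\mathcal S}$. A reachable support is any output $\widehat{\mathcal S}$ obtainable through some sequence of choices of maximizers. For a finite set $\mathcal S^\star=\{\theta^\star_\ell\}_{\ell=1}^k$ of pairwise distinct parameters, OMP achieves exact $k$-step recovery of $\mathcal S^\star$ if for every choice of nonzero reals $c_1,\dots,c_k$ every reachable support of OMP with input $\mathbf y=\sum_{\ell=1}^k c_\ell\mathbf a(\theta^\star_\ell)$ equals $\mathcal S^\star$ (for $\mathcal S^\star=\emptyset$ this holds trivially). *)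

theory Defs
  imports "HOL-Analysis.Analysis"
begin

definition kernel :: "(real ^ 'd \<Rightarrow> 'h::real_inner) \<Rightarrow> real ^ 'd \<Rightarrow> real ^ 'd \<Rightarrow> real" where
  "kernel a \<theta> \<theta>' = inner (a \<theta>) (a \<theta>')"

definition admissible_kernel :: "(real ^ 'd \<Rightarrow> 'h::real_inner) \<Rightarrow> bool" where
  "admissible_kernel a \<longleftrightarrow>
     (\<forall>\<theta>. kernel a \<theta> \<theta> = 1)
   \<and> (\<forall>\<theta>. ((\<lambda>\<theta>'. kernel a \<theta> \<theta>') \<longlongrightarrow> 1) (at \<theta>))
   \<and> (\<forall>\<epsilon>>0. \<forall>\<theta>. \<exists>K. compact K \<and> (SUP \<theta>'\<in>- K. kernel a \<theta>' \<theta>) < \<epsilon>)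
   \<and> (\<forall>\<theta> \<theta>'. \<theta> \<noteq> \<theta>' \<longrightarrow> 0 \<le> kernel a \<theta> \<theta>' \<and> kernel a \<theta> \<theta>' < 1)"

text \<open>Support {theta_1,...,theta_k} given by an indexing function on {1..k}.\<close>
definition admissible_support ::
  "(real ^ 'd \<Rightarrow> 'h::real_inner) \<Rightarrow> nat \<Rightarrow> (nat \<Rightarrow> real ^ 'd) \<Rightarrow> bool" where
  "admissible_support a k ths \<longleftrightarrow>
     (\<forall>T c. T \<subseteq> {1..k} \<and> T \<noteq> {} \<and> (\<forall>l\<in>T. 0 < c l) \<and> (\<Sum>l\<in>T. c l) < 1 \<longrightarrow>
        (let \<psi> = (\<lambda>\<theta>. \<Sum>l\<in>T. c l * kernel a \<theta> (ths l)) in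
          {\<theta>. \<forall>\<theta>'. \<psi> \<theta>' \<le> \<psi> \<theta>} \<subseteq> ths ` T
        \<and> (\<forall>l\<in>{1..k} - T.
             (\<forall>\<theta>\<in>ths ` T. \<psi> \<theta> - kernel a \<theta> (ths l) \<le> 0) \<longrightarrow>
             (\<forall>\<theta>. \<psi> \<theta> - kernel a \<theta> (ths l) \<le> 0))))"

text \<open>Runs of OMP with input y: omp_run a y sel r means that after selecting the
  parameters in the list sel (in order) the current residual can be r.\<close>
inductive omp_run :: "(real ^ 'd \<Rightarrow> 'h::real_inner) \<Rightarrow> 'h \<Rightarrow> (real ^ 'd) list \<Rightarrow> 'h \<Rightarrow> bool"
  for a :: "real ^ 'd \<Rightarrow> 'h" and y :: 'h where
  init: "omp_run a y [] y"
| step: "\<lbrakk> omp_run a y sel r; r \<noteq> 0;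
           \<forall>\<theta>'. \<bar>inner (a \<theta>') r\<bar> \<le> \<bar>inner (a \<theta>) r\<bar>;
           t = Suc (length sel);
           \<forall>c'. norm (y - (\<Sum>l<t. c l *\<^sub>R a ((sel @ [\<theta>]) ! l)))
                 \<le> norm (y - (\<Sum>l<t. c' l *\<^sub>R a ((sel @ [\<theta>]) ! l))) \<rbrakk>
         \<Longrightarrow> omp_run a y (sel @ [\<theta>]) (y - (\<Sum>l<t. c l *\<^sub>R a ((sel @ [\<theta>]) ! l)))"

definition omp_reachable_support :: "(real ^ 'd \<Rightarrow> 'h::real_inner) \<Rightarrow> 'h \<Rightarrow> (real ^ 'd) set \<Rightarrow> bool" where
  "omp_reachable_support a y S \<longleftrightarrow> (\<exists>sel. omp_run a y sel 0 \<and> S = set sel)"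

definition omp_exact_recovery :: "(real ^ 'd \<Rightarrow> 'h::real_inner) \<Rightarrow> (real ^ 'd) set \<Rightarrow> bool" where
  "omp_exact_recovery a S \<longleftrightarrow>
     (\<forall>c. (\<forall>\<theta>\<in>S. c \<theta> \<noteq> 0) \<longrightarrow>
        (\<forall>S'. omp_reachable_support a (\<Sum>\<theta>\<in>S. c \<theta> *\<^sub>R a \<theta>) S' \<longrightarrow> S' = S))"

end

theory Submission
  imports Defs
begin



lemma proj_exists:
  fixes a :: "'p \<Rightarrow> 'h::real_inner"
  assumes "finite B"
  shows "\<exists>\<beta>. \<forall>y\<in>B. inner (x - (\<Sum>z\<in>B. \<beta> z *\<^sub>R a z)) (a y) = 0"
  using assms
proof (induction B arbitrary: x rule: finite_induct)
  case empty
  then show ?case by simp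
next
  case (insert q B)
  have orthB: "inner v (\<Sum>z\<in>B. g z *\<^sub>R a z) = 0" if "\<forall>y\<in>B. inner v (a y) = 0" for v g
    using that by (simp add: inner_sum_right)
  obtain \<beta> where \<beta>: "\<forall>y\<in>B. inner (x - (\<Sum>z\<in>B. \<beta> z *\<^sub>R a z)) (a y) = 0"
    using insert.IH by blast
  obtain \<beta>' where \<beta>': "\<forall>y\<in>B. inner (a q - (\<Sum>z\<in>B. \<beta>' z *\<^sub>R a z)) (a y) = 0"
    using insert.IH by blast
  define p where "p = a q - (\<Sum>z\<in>B. \<beta>' z *\<^sub>R a z)"
  define r where "r = x - (\<Sum>z\<in>B. \<beta> z *\<^sub>R a z)"
  have rB: "\<forall>y\<in>B. inner r (a y) = 0" using \<beta> r_def by simp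
  have pB: "\<forall>y\<in>B. inner p (a y) = 0" using \<beta>' p_def by simp
  have aq: "a q = p + (\<Sum>z\<in>B. \<beta>' z *\<^sub>R a z)" by (simp add: p_def)
  show ?case
  proof (cases "p = 0")
    case True
    define \<gamma> where "\<gamma> = (\<lambda>z. if z = q then 0 else \<beta> z)"
    have s: "(\<Sum>z\<in>insert q B. \<gamma> z *\<^sub>R a z) = (\<Sum>z\<in>B. \<beta> z *\<^sub>R a z)"
      using insert.hyps by (simp add: \<gamma>_def, intro sum.cong, auto)
    have "inner r (a q) = 0" using aq True orthB[OF rB] by simp
    then show ?thesis using rB by (intro exI[of _ \<gamma>]) (auto simp: s r_def)
  next
    case False
    define t where "t = inner r p / inner p p"
    have pp: "inner p p \<noteq> 0" using False by simp
    define \<gamma> where "\<gamma> = (\<lambda>z. if z = q then t else \<beta> z - t * \<beta>' z)"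
    have s0: "(\<Sum>z\<in>B. \<gamma> z *\<^sub>R a z) = (\<Sum>z\<in>B. \<beta> z *\<^sub>R a z) - t *\<^sub>R (\<Sum>z\<in>B. \<beta>' z *\<^sub>R a z)"
    proof -
      have "(\<Sum>z\<in>B. \<gamma> z *\<^sub>R a z) = (\<Sum>z\<in>B. \<beta> z *\<^sub>R a z - t *\<^sub>R (\<beta>' z *\<^sub>R a z))"
        using insert.hyps by (intro sum.cong) (auto simp: \<gamma>_def algebra_simps)
      then show ?thesis by (simp add: sum_subtractf scaleR_sum_right)
    qed
    have s: "x - (\<Sum>z\<in>insert q B. \<gamma> z *\<^sub>R a z) = r - t *\<^sub>R p"
      using insert.hyps s0 by (simp add: \<gamma>_def r_def p_def algebra_simps)
    have o1: "\<forall>y\<in>B. inner (r - t *\<^sub>R p) (a y) = 0" using rB pB by (simp add: inner_diff_left)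
    have o2: "inner (r - t *\<^sub>R p) p = 0" using pp by (simp add: inner_diff_left t_def)
    have "inner (r - t *\<^sub>R p) (a q) = 0"
      using o1 o2 orthB[OF o1] aq by (simp add: inner_add_right)
    then show ?thesis using o1 by (intro exI[of _ \<gamma>]) (auto simp: s)
  qed
qed

lemma group_sum:
  fixes f :: "'p \<Rightarrow> 'h::real_vector"
  assumes "finite S" "set xs \<subseteq> S"
  shows "\<exists>e. (\<Sum>l<length xs. g l *\<^sub>R f (xs!l)) = (\<Sum>x\<in>S. e x *\<^sub>R f x)"
proof -
  define e where "e x = (\<Sum>l\<in>{l. l \<in> {..<length xs} \<and> xs!l = x}. g l)" for x
  have "(\<Sum>x\<in>S. e x *\<^sub>R f x) = (\<Sum>x\<in>S. \<Sum>l\<in>{l. l \<in> {..<length xs} \<and> xs!l = x}. g l *\<^sub>R f (xs!l))"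
    unfolding e_def scaleR_sum_left by (intro sum.cong refl) auto
  also have "\<dots> = (\<Sum>l<length xs. g l *\<^sub>R f (xs!l))"
    by (rule sum.group) (use assms in auto)
  finally show ?thesis by metis
qed




locale omp_ctx =
  fixes a :: "real ^ 'd \<Rightarrow> 'h::real_inner" and k :: nat and ths :: "nat \<Rightarrow> real ^ 'd"
  assumes adm: "admissible_kernel a" and injt: "inj_on ths {1..k}"
    and supp: "admissible_support a k ths"
begin

lemma kern_self: "kernel a x x = 1"
  using adm unfolding admissible_kernel_def by blast

lemma kern_bounds: "0 \<le> kernel a x y \<and> kernel a x y \<le> 1"
proof (cases "x = y")
  case True then show ?thesis by (simp add: kern_self)
next
  case False then show ?thesis using adm unfolding admissible_kernel_def by force
qed

lemma a_cont: "continuous_on UNIV a"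
proof -
  have "isCont a t" for t
  proof -
    have lim: "((\<lambda>s. kernel a t s) \<longlongrightarrow> 1) (at t)"
      using adm unfolding admissible_kernel_def by blast
    have eq: "norm (a s - a t) = sqrt (2 - 2 * kernel a t s)" for s
    proof -
      have "(norm (a s - a t))^2 = inner (a s - a t) (a s - a t)" by (simp add: power2_norm_eq_inner)
      also have "\<dots> = kernel a s s - 2 * kernel a t s + kernel a t t"
        by (simp add: kernel_def inner_diff_left inner_diff_right inner_commute)
      also have "\<dots> = 2 - 2 * kernel a t s" by (simp add: kern_self)
      finally show ?thesis by (metis norm_ge_zero real_sqrt_unique)
    qed
    have "((\<lambda>s. sqrt (2 - 2 * kernel a t s)) \<longlongrightarrow> sqrt (2 - 2 * 1)) (at t)"
      by (intro tendsto_intros lim)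
    hence "((\<lambda>s. norm (a s - a t)) \<longlongrightarrow> 0) (at t)" by (simp add: eq)
    hence "((\<lambda>s. a s - a t) \<longlongrightarrow> 0) (at t)" by (simp add: tendsto_norm_zero_iff)
    hence "(a \<longlongrightarrow> a t) (at t)" by (simp add: LIM_zero_iff)
    thus ?thesis by (simp add: isCont_def)
  qed
  thus ?thesis by (simp add: continuous_at_imp_continuous_on)
qed

abbreviation "Sst \<equiv> ths ` {1..k}"

lemma fin_sub: "A \<subseteq> Sst \<Longrightarrow> finite A"
  using finite_subset by blast

lemma to_index:
  assumes "A \<subseteq> Sst"
  obtains T where "T \<subseteq> {1..k}" "ths ` T = A" "inj_on ths T"
proof -
  define T where "T = {i\<in>{1..k}. ths i \<in> A}"
  have "ths ` T = A" using assms unfolding T_def by auto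
  moreover have "inj_on ths T" using injt unfolding T_def by (rule inj_on_subset) auto
  moreover have "T \<subseteq> {1..k}" unfolding T_def by auto
  ultimately show ?thesis using that by blast
qed

lemma supp_inst:
  assumes "T \<subseteq> {1..k}" "T \<noteq> {}" "\<forall>l\<in>T. 0 < c l" "(\<Sum>l\<in>T. c l) < 1"
  shows "{\<theta>. \<forall>\<theta>'. (\<Sum>l\<in>T. c l * kernel a \<theta>' (ths l)) \<le> (\<Sum>l\<in>T. c l * kernel a \<theta> (ths l))} \<subseteq> ths ` T
        \<and> (\<forall>l\<in>{1..k} - T.
             (\<forall>\<theta>\<in>ths ` T. (\<Sum>i\<in>T. c i * kernel a \<theta> (ths i)) - kernel a \<theta> (ths l) \<le> 0) \<longrightarrow>
             (\<forall>\<theta>. (\<Sum>i\<in>T. c i * kernel a \<theta> (ths i)) - kernel a \<theta> (ths l) \<le> 0))"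
proof -
  have H0: "\<forall>T c. T \<subseteq> {1..k} \<and> T \<noteq> {} \<and> (\<forall>l\<in>T. 0 < c l) \<and> (\<Sum>l\<in>T. c l) < 1 \<longrightarrow>
        ({\<theta>. \<forall>\<theta>'. (\<Sum>l\<in>T. c l * kernel a \<theta>' (ths l)) \<le> (\<Sum>l\<in>T. c l * kernel a \<theta> (ths l))} \<subseteq> ths ` T
        \<and> (\<forall>l\<in>{1..k} - T.
             (\<forall>\<theta>\<in>ths ` T. (\<Sum>i\<in>T. c i * kernel a \<theta> (ths i)) - kernel a \<theta> (ths l) \<le> 0) \<longrightarrow>
             (\<forall>\<theta>. (\<Sum>i\<in>T. c i * kernel a \<theta> (ths i)) - kernel a \<theta> (ths l) \<le> 0)))"
    using supp unfolding admissible_support_def Let_def .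
  show ?thesis using mp[OF spec[OF spec[OF H0, of T], of c]] assms by blast
qed

lemma Li:
  assumes A: "A \<subseteq> Sst" "A \<noteq> {}" and pos: "\<forall>x\<in>A. 0 < c x" and s1: "(\<Sum>x\<in>A. c x) < 1"
    and mx: "\<forall>t'. (\<Sum>x\<in>A. c x * kernel a t' x) \<le> (\<Sum>x\<in>A. c x * kernel a t x)"
  shows "t \<in> A"
proof -
  obtain T where T: "T \<subseteq> {1..k}" "ths ` T = A" "inj_on ths T" using to_index A(1) by blast
  have sA: "(\<Sum>i\<in>T. g (ths i)) = (\<Sum>x\<in>A. g x)" for g :: "_ \<Rightarrow> real"
    using T sum.reindex[OF T(3), of g] by (simp add: o_def)
  note H = conjunct1[OF supp_inst[of T "\<lambda>l. c (ths l)"]]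
  have "t \<in> {\<theta>. \<forall>\<theta>'. (\<Sum>l\<in>T. c (ths l) * kernel a \<theta>' (ths l)) \<le> (\<Sum>l\<in>T. c (ths l) * kernel a \<theta> (ths l))}"
    using mx by (simp add: sA[of "\<lambda>x. c x * kernel a _ x"])
  moreover have "T \<noteq> {}" using T A by auto
  moreover have "\<forall>l\<in>T. 0 < c (ths l)" using T pos by auto
  moreover have "(\<Sum>l\<in>T. c (ths l)) < 1" using sA[of c] s1 by simp
  ultimately show ?thesis using H T by blast
qed

lemma Lii:
  assumes A: "A \<subseteq> Sst" "A \<noteq> {}" and pos: "\<forall>x\<in>A. 0 < c x" and s1: "(\<Sum>x\<in>A. c x) < 1"
    and l: "l \<in> Sst" "l \<notin> A"
    and hyp: "\<forall>y\<in>A. (\<Sum>x\<in>A. c x * kernel a y x) \<le> kernel a y l"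
  shows "(\<Sum>x\<in>A. c x * kernel a t x) \<le> kernel a t l"
proof -
  obtain T where T: "T \<subseteq> {1..k}" "ths ` T = A" "inj_on ths T" using to_index A(1) by blast
  have sA: "(\<Sum>i\<in>T. g (ths i)) = (\<Sum>x\<in>A. g x)" for g :: "_ \<Rightarrow> real"
    using T sum.reindex[OF T(3), of g] by (simp add: o_def)
  have ne: "T \<noteq> {}" using T A by auto
  have ps: "\<forall>l\<in>T. 0 < c (ths l)" using T pos by auto
  have sm: "(\<Sum>l\<in>T. c (ths l)) < 1" using sA[of c] s1 by simp
  note H = conjunct2[OF supp_inst[of T "\<lambda>l. c (ths l)", OF T(1) ne ps sm]]
  obtain i where i: "i \<in> {1..k}" "l = ths i" using l by auto
  have iT: "i \<in> {1..k} - T" using i l T by auto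
  have "\<forall>\<theta>\<in>ths ` T. (\<Sum>j\<in>T. c (ths j) * kernel a \<theta> (ths j)) - kernel a \<theta> (ths i) \<le> 0"
    using hyp T i by (simp add: sA[of "\<lambda>x. c x * kernel a _ x"])
  then have "(\<Sum>j\<in>T. c (ths j) * kernel a t (ths j)) - kernel a t (ths i) \<le> 0"
    using H iT by blast
  then show ?thesis using i by (simp add: sA[of "\<lambda>x. c x * kernel a t x"])
qed

end



context omp_ctx
begin

definition ERC :: "(real ^ 'd) set \<Rightarrow> bool" where
  "ERC A \<longleftrightarrow> (\<forall>t b. t \<notin> A \<longrightarrow> (\<forall>y\<in>A. inner (a t - (\<Sum>x\<in>A. b x *\<^sub>R a x)) (a y) = 0) \<longrightarrow>
      (\<forall>x\<in>A. 0 \<le> b x) \<and> (\<Sum>x\<in>A. b x) < 1)"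

lemma inner_single:
  assumes "finite A" "q \<in> A" "\<forall>x\<in>A-{q}. inner (a x) V = 0"
  shows "inner (\<Sum>x\<in>A. u x *\<^sub>R a x) V = u q * inner (a q) V"
proof -
  have "inner (\<Sum>x\<in>A. u x *\<^sub>R a x) V = (\<Sum>x\<in>A. u x * inner (a x) V)"
    by (simp add: inner_sum_left)
  also have "\<dots> = u q * inner (a q) V + (\<Sum>x\<in>A-{q}. u x * inner (a x) V)"
    using sum.remove[OF assms(1,2)] by simp
  also have "(\<Sum>x\<in>A-{q}. u x * inner (a x) V) = 0" using assms(3) by simp
  finally show ?thesis by simp
qed

lemma perp:
  assumes A: "A \<subseteq> Sst" "q \<in> A" and E: "ERC (A - {q})"
  shows "\<exists>u. (\<forall>x\<in>A-{q}. inner (a x) (\<Sum>z\<in>A. u z *\<^sub>R a z) = 0)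
           \<and> 0 < inner (a q) (\<Sum>z\<in>A. u z *\<^sub>R a z)
           \<and> (\<forall>t. 0 \<le> inner (a t) (\<Sum>z\<in>A. u z *\<^sub>R a z)) \<and> 0 < (\<Sum>z\<in>A. u z)"
proof -
  define A0 where "A0 = A - {q}"
  have finA: "finite A" using A fin_sub by blast
  have fin0: "finite A0" using finA A0_def by simp
  obtain \<beta> where \<beta>: "\<forall>y\<in>A0. inner (a q - (\<Sum>z\<in>A0. \<beta> z *\<^sub>R a z)) (a y) = 0"
    using proj_exists[OF fin0] by blast
  have "q \<notin> A0" using A0_def by simp
  then have bpos: "\<forall>x\<in>A0. 0 \<le> \<beta> x" and bsum: "(\<Sum>x\<in>A0. \<beta> x) < 1"
    using E \<beta> unfolding ERC_def A0_def by blast+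
  define u where "u = (\<lambda>z. if z = q then 1 else - \<beta> z)"
  have vs: "(\<Sum>z\<in>A. u z *\<^sub>R a z) = a q - (\<Sum>z\<in>A0. \<beta> z *\<^sub>R a z)"
  proof -
    have "(\<Sum>z\<in>A. u z *\<^sub>R a z) = u q *\<^sub>R a q + (\<Sum>z\<in>A0. u z *\<^sub>R a z)"
      using sum.remove[OF finA A(2)] A0_def by simp
    also have "(\<Sum>z\<in>A0. u z *\<^sub>R a z) = (\<Sum>z\<in>A0. - (\<beta> z *\<^sub>R a z))"
      by (intro sum.cong) (auto simp: u_def A0_def)
    finally show ?thesis by (simp add: u_def sum_negf)
  qed
  have us: "(\<Sum>z\<in>A. u z) = 1 - (\<Sum>z\<in>A0. \<beta> z)"
  proof -
    have "(\<Sum>z\<in>A. u z) = u q + (\<Sum>z\<in>A0. u z)"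
      using sum.remove[OF finA A(2)] A0_def by simp
    also have "(\<Sum>z\<in>A0. u z) = (\<Sum>z\<in>A0. - \<beta> z)"
      by (intro sum.cong) (auto simp: u_def A0_def)
    finally show ?thesis by (simp add: u_def sum_negf)
  qed
  define V where "V = a q - (\<Sum>z\<in>A0. \<beta> z *\<^sub>R a z)"
  have c1: "\<forall>x\<in>A0. inner (a x) V = 0" using \<beta> by (simp add: V_def inner_commute)
  have iq: "inner (a t) V = kernel a t q - (\<Sum>z\<in>A0. \<beta> z * kernel a t z)" for t
    by (simp add: V_def inner_diff_right inner_sum_right kernel_def)
  have "(\<Sum>z\<in>A0. \<beta> z * kernel a q z) \<le> (\<Sum>z\<in>A0. \<beta> z)"
    using bpos kern_bounds by (intro sum_mono) (simp add: mult_left_le)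
  then have c2: "0 < inner (a q) V" using iq[of q] bsum by (simp add: kern_self)
  have c3: "0 \<le> inner (a t) V" for t
  proof -
    define A' where "A' = {z\<in>A0. 0 < \<beta> z}"
    have sA: "(\<Sum>z\<in>A0. \<beta> z * kernel a s z) = (\<Sum>z\<in>A'. \<beta> z * kernel a s z)" for s
      using fin0 bpos unfolding A'_def by (intro sum.mono_neutral_right) force+
    show ?thesis
    proof (cases "A' = {}")
      case True
      then show ?thesis using iq[of t] sA[of t] kern_bounds by simp
    next
      case False
      have sub: "A' \<subseteq> Sst" using A A0_def A'_def by auto
      have ps: "\<forall>x\<in>A'. 0 < \<beta> x" using A'_def by simp
      have "(\<Sum>x\<in>A'. \<beta> x) \<le> (\<Sum>x\<in>A0. \<beta> x)"
        using fin0 bpos A'_def by (intro sum_mono2) auto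
      then have s1: "(\<Sum>x\<in>A'. \<beta> x) < 1" using bsum by simp
      have hyp: "\<forall>y\<in>A'. (\<Sum>x\<in>A'. \<beta> x * kernel a y x) \<le> kernel a y q"
      proof
        fix y assume y: "y \<in> A'"
        then have "inner (a y) V = 0" using c1 A'_def by auto
        then show "(\<Sum>x\<in>A'. \<beta> x * kernel a y x) \<le> kernel a y q" using iq[of y] sA[of y] by simp
      qed
      have "(\<Sum>x\<in>A'. \<beta> x * kernel a t x) \<le> kernel a t q"
        by (rule Lii[OF sub False ps s1 _ _ hyp]) (use A A'_def A0_def in auto)
      then show ?thesis using iq[of t] sA[of t] by simp
    qed
  qed
  show ?thesis
    using c1 c2 c3 us bsum vs unfolding V_def A0_def by (intro exI[of _ u]) auto
qed

lemma W:
  "finite A \<Longrightarrow> A \<subseteq> Sst \<Longrightarrow> (\<forall>A'. A' \<subset> A \<longrightarrow> ERC A') \<Longrightarrow>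
    \<exists>\<gamma>. \<forall>y\<in>A. inner (a y) (\<Sum>x\<in>A. \<gamma> x *\<^sub>R a x) = 1"
proof (induction A rule: finite_induct)
  case empty
  then show ?case by simp
next
  case (insert q F)
  have E: "\<forall>A'. A' \<subset> F \<longrightarrow> ERC A'" using insert.prems by blast
  obtain \<gamma>0 where g0: "\<forall>y\<in>F. inner (a y) (\<Sum>x\<in>F. \<gamma>0 x *\<^sub>R a x) = 1"
    using insert.IH insert.prems E by blast
  have EF: "ERC (insert q F - {q})" using insert.prems insert.hyps by auto
  obtain u where u: "\<forall>x\<in>insert q F-{q}. inner (a x) (\<Sum>z\<in>insert q F. u z *\<^sub>R a z) = 0"
      "0 < inner (a q) (\<Sum>z\<in>insert q F. u z *\<^sub>R a z)"
    using perp[OF insert.prems(1) _ EF] by blast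
  define V where "V = (\<Sum>z\<in>insert q F. u z *\<^sub>R a z)"
  define w0 where "w0 = (\<Sum>x\<in>F. \<gamma>0 x *\<^sub>R a x)"
  define t where "t = (1 - inner (a q) w0) / inner (a q) V"
  define \<gamma> where "\<gamma> = (\<lambda>x. (if x \<in> F then \<gamma>0 x else 0) + t * u x)"
  have s1: "(\<Sum>x\<in>insert q F. (if x \<in> F then \<gamma>0 x else 0) *\<^sub>R a x) = w0"
  proof -
    have "(\<Sum>x\<in>insert q F. (if x \<in> F then \<gamma>0 x else 0) *\<^sub>R a x) = (\<Sum>x\<in>F. (if x \<in> F then \<gamma>0 x else 0) *\<^sub>R a x)"
      using insert.hyps by simp
    also have "\<dots> = w0" unfolding w0_def by (rule sum.cong) auto
    finally show ?thesis .
  qed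
  have ws: "(\<Sum>x\<in>insert q F. \<gamma> x *\<^sub>R a x) = w0 + t *\<^sub>R V"
    unfolding \<gamma>_def V_def scaleR_add_left sum.distrib s1
    by (simp add: scaleR_sum_right)
  show ?case
  proof (intro exI[of _ \<gamma>] ballI)
    fix y assume y: "y \<in> insert q F"
    show "inner (a y) (\<Sum>x\<in>insert q F. \<gamma> x *\<^sub>R a x) = 1"
    proof (cases "y = q")
      case True
      then show ?thesis using u(2) unfolding ws t_def V_def by (simp add: inner_add_right)
    next
      case False
      then have "y \<in> F" using y by simp
      then show ?thesis using u(1) g0 False unfolding ws V_def w0_def by (simp add: inner_add_right)
    qed
  qed
qed

lemma maxarg:
  assumes A: "A \<subseteq> Sst" "A \<noteq> {}" and pos: "\<forall>x\<in>A. 0 < \<gamma> x"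
    and one: "\<forall>y\<in>A. (\<Sum>x\<in>A. \<gamma> x * kernel a y x) = 1" and t: "t \<notin> A"
  shows "(\<Sum>x\<in>A. \<gamma> x * kernel a t x) < 1"
proof -
  define F where "F = (\<lambda>s. \<Sum>x\<in>A. \<gamma> x * kernel a s x)"
  have finA: "finite A" using A fin_sub by blast
  define G where "G = (\<Sum>x\<in>A. \<gamma> x)"
  have G: "0 < G" unfolding G_def using finA A(2) pos by (intro sum_pos) auto
  have maxin: "s \<in> A" if "\<forall>s'. F s' \<le> F s" for s
  proof -
    define c where "c = (\<lambda>x. \<gamma> x / (2 * G))"
    have "(\<Sum>x\<in>A. c x) = G / (2 * G)" unfolding c_def G_def by (simp add: sum_divide_distrib)
    then have cs: "(\<Sum>x\<in>A. c x) < 1" using G by simp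
    have cp: "\<forall>x\<in>A. 0 < c x" using pos G by (simp add: c_def)
    have cF: "(\<Sum>x\<in>A. c x * kernel a s x) = F s / (2 * G)" for s
      unfolding c_def F_def by (simp add: sum_divide_distrib)
    show ?thesis
      by (rule Li[OF A cp cs]) (use that G in \<open>auto simp: cF intro: divide_right_mono\<close>)
  qed
  define \<epsilon> where "\<epsilon> = 1 / (G + 1)"
  have \<epsilon>: "0 < \<epsilon>" "G * \<epsilon> < 1" using G by (auto simp: \<epsilon>_def field_simps)
  have "\<forall>y\<in>A. \<exists>K. compact K \<and> (SUP s\<in>- K. kernel a s y) < \<epsilon>"
    using adm \<epsilon>(1) unfolding admissible_kernel_def by blast
  from bchoice[OF this] obtain Kf where Kf: "\<forall>y\<in>A. compact (Kf y) \<and> (SUP s\<in>- Kf y. kernel a s y) < \<epsilon>"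
    by blast
  define K where "K = insert t (\<Union>y\<in>A. Kf y)"
  have Kc: "compact K" unfolding K_def using Kf finA by (intro compact_insert compact_UN) auto
  have out: "F s < 1" if "s \<notin> K" for s
  proof -
    have "kernel a s y \<le> \<epsilon>" if y: "y \<in> A" for y
    proof -
      have "s \<in> - Kf y" using \<open>s \<notin> K\<close> y K_def by auto
      moreover have "bdd_above ((\<lambda>s. kernel a s y) ` (- Kf y))"
        using kern_bounds by (intro bdd_aboveI[of _ 1]) auto
      ultimately have "kernel a s y \<le> (SUP s\<in>- Kf y. kernel a s y)" by (rule cSUP_upper)
      then show ?thesis using Kf y by force
    qed
    then have "F s \<le> (\<Sum>x\<in>A. \<gamma> x * \<epsilon>)" unfolding F_def
      using pos by (intro sum_mono mult_left_mono) auto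
    also have "\<dots> = G * \<epsilon>" by (simp add: G_def sum_distrib_right)
    finally show ?thesis using \<epsilon> by simp
  qed
  have contF: "continuous_on K F"
    unfolding F_def kernel_def
    by (intro continuous_intros continuous_on_subset[OF a_cont]) auto
  obtain m where m: "m \<in> K" "\<forall>s\<in>K. F s \<le> F m"
    using continuous_attains_sup[OF Kc _ contF] K_def by blast
  obtain y0 where y0: "y0 \<in> A" using A(2) by blast
  have Fy0: "F y0 = 1" using one y0 F_def by simp
  have "y0 \<in> K" using out Fy0 by force
  then have m1: "1 \<le> F m" using m Fy0 by force
  have glob: "\<forall>s'. F s' \<le> F m"
  proof
    fix s' show "F s' \<le> F m"
    proof (cases "s' \<in> K")
      case True then show ?thesis using m by blast
    next
      case False then show ?thesis using out[of s'] m1 by linarith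
    qed
  qed
  then have "m \<in> A" by (rule maxin)
  then have Fm: "F m = 1" using one F_def by simp
  have "t \<in> K" using K_def by simp
  then have "F t \<le> 1" using m Fm by force
  moreover have "F t \<noteq> 1"
  proof
    assume "F t = 1"
    then have "\<forall>s'. F s' \<le> F t" using glob Fm by simp
    then show False using maxin t by blast
  qed
  ultimately show ?thesis unfolding F_def by simp
qed

end



context omp_ctx
begin

lemma ERC_all: "A \<subseteq> Sst \<Longrightarrow> ERC A"
proof (induction "card A" arbitrary: A rule: less_induct)
  case less
  have finA: "finite A" using less.prems fin_sub by blast
  have IH: "\<forall>A'. A' \<subset> A \<longrightarrow> ERC A'"
  proof (intro allI impI)
    fix A' assume "A' \<subset> A"
    then show "ERC A'" using less.hyps less.prems psubset_card_mono[OF finA] by auto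
  qed
  show "ERC A" unfolding ERC_def
  proof (intro allI impI)
    fix t b assume tA: "t \<notin> A" and orth: "\<forall>y\<in>A. inner (a t - (\<Sum>x\<in>A. b x *\<^sub>R a x)) (a y) = 0"
    have key: "inner (a t) (\<Sum>z\<in>A. g z *\<^sub>R a z) = (\<Sum>x\<in>A. b x * inner (a x) (\<Sum>z\<in>A. g z *\<^sub>R a z))" for g
    proof -
      have "inner (a t - (\<Sum>x\<in>A. b x *\<^sub>R a x)) (\<Sum>z\<in>A. g z *\<^sub>R a z) = 0"
        using orth by (simp add: inner_sum_right)
      then show ?thesis by (simp add: inner_diff_left inner_sum_left)
    qed
    have nonneg: "0 \<le> b q" if q: "q \<in> A" for q
    proof -
      have "ERC (A - {q})" using IH q by blast
      then obtain u where u: "\<forall>x\<in>A-{q}. inner (a x) (\<Sum>z\<in>A. u z *\<^sub>R a z) = 0"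
        "0 < inner (a q) (\<Sum>z\<in>A. u z *\<^sub>R a z)" "\<forall>t. 0 \<le> inner (a t) (\<Sum>z\<in>A. u z *\<^sub>R a z)"
        using perp[OF less.prems q] by blast
      have "inner (a t) (\<Sum>z\<in>A. u z *\<^sub>R a z) = b q * inner (a q) (\<Sum>z\<in>A. u z *\<^sub>R a z)"
        using key[of u] inner_single[OF finA q u(1), of b] by (simp add: inner_sum_left)
      then have "0 \<le> b q * inner (a q) (\<Sum>z\<in>A. u z *\<^sub>R a z)" using u(3) by metis
      then show ?thesis using u(2) by (simp add: zero_le_mult_iff)
    qed
    have sum1: "(\<Sum>x\<in>A. b x) < 1"
    proof (cases "A = {}")
      case True then show ?thesis by simp
    next
      case False
      obtain \<gamma> where g: "\<forall>y\<in>A. inner (a y) (\<Sum>x\<in>A. \<gamma> x *\<^sub>R a x) = 1"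
        using W[OF finA less.prems IH] by blast
      have gpos: "0 < \<gamma> q" if q: "q \<in> A" for q
      proof -
        have "ERC (A - {q})" using IH q by blast
        then obtain u where u: "\<forall>x\<in>A-{q}. inner (a x) (\<Sum>z\<in>A. u z *\<^sub>R a z) = 0"
          "0 < inner (a q) (\<Sum>z\<in>A. u z *\<^sub>R a z)" "0 < (\<Sum>z\<in>A. u z)"
          using perp[OF less.prems q] by blast
        have e1: "inner (\<Sum>x\<in>A. \<gamma> x *\<^sub>R a x) (\<Sum>z\<in>A. u z *\<^sub>R a z) = \<gamma> q * inner (a q) (\<Sum>z\<in>A. u z *\<^sub>R a z)"
          by (rule inner_single[OF finA q u(1)])
        have "inner (\<Sum>x\<in>A. \<gamma> x *\<^sub>R a x) (\<Sum>z\<in>A. u z *\<^sub>R a z) = (\<Sum>z\<in>A. u z * inner (a z) (\<Sum>x\<in>A. \<gamma> x *\<^sub>R a x))"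
          by (subst inner_commute) (simp add: inner_sum_left)
        also have "\<dots> = (\<Sum>z\<in>A. u z)" using g by simp
        finally have "0 < \<gamma> q * inner (a q) (\<Sum>z\<in>A. u z *\<^sub>R a z)" using e1 u(3) by simp
        then show ?thesis using u(2) by (simp add: zero_less_mult_iff)
      qed
      have one: "\<forall>y\<in>A. (\<Sum>x\<in>A. \<gamma> x * kernel a y x) = 1"
        using g by (simp add: inner_sum_right kernel_def)
      have "(\<Sum>x\<in>A. \<gamma> x * kernel a t x) < 1"
        by (rule maxarg[OF less.prems False _ one tA]) (use gpos in auto)
      moreover have "(\<Sum>x\<in>A. \<gamma> x * kernel a t x) = inner (a t) (\<Sum>x\<in>A. \<gamma> x *\<^sub>R a x)"
        by (simp add: inner_sum_right kernel_def)
      moreover have "inner (a t) (\<Sum>x\<in>A. \<gamma> x *\<^sub>R a x) = (\<Sum>x\<in>A. b x)"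
        using key[of \<gamma>] g by simp
      ultimately show ?thesis by simp
    qed
    show "(\<forall>x\<in>A. 0 \<le> b x) \<and> (\<Sum>x\<in>A. b x) < 1" using nonneg sum1 by blast
  qed
qed

lemma indep:
  assumes "A \<subseteq> Sst" "(\<Sum>x\<in>A. u x *\<^sub>R a x) = 0" "q \<in> A"
  shows "u q = 0"
proof -
  have finA: "finite A" using assms fin_sub by blast
  have "ERC (A - {q})" using ERC_all assms by blast
  then obtain w where w: "\<forall>x\<in>A-{q}. inner (a x) (\<Sum>z\<in>A. w z *\<^sub>R a z) = 0"
    "0 < inner (a q) (\<Sum>z\<in>A. w z *\<^sub>R a z)"
    using perp[OF assms(1,3)] by blast
  have "u q * inner (a q) (\<Sum>z\<in>A. w z *\<^sub>R a z) = 0"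
    using inner_single[OF finA assms(3) w(1), of u] assms(2) by simp
  then show ?thesis using w(2) by simp
qed

lemma select:
  assumes S: "S \<subseteq> Sst" and r: "r = (\<Sum>x\<in>S. d x *\<^sub>R a x)" "r \<noteq> 0"
    and mx: "\<forall>t'. \<bar>inner (a t') r\<bar> \<le> \<bar>inner (a t) r\<bar>"
  shows "t \<in> S"
proof (rule ccontr)
  assume tS: "t \<notin> S"
  have finS: "finite S" using S fin_sub by blast
  obtain b where orth: "\<forall>y\<in>S. inner (a t - (\<Sum>z\<in>S. b z *\<^sub>R a z)) (a y) = 0"
    using proj_exists[OF finS] by blast
  have bp: "\<forall>x\<in>S. 0 \<le> b x" and bs: "(\<Sum>x\<in>S. b x) < 1"
    using ERC_all[OF S] tS orth unfolding ERC_def by blast+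
  have "inner (a t - (\<Sum>z\<in>S. b z *\<^sub>R a z)) r = 0"
    using orth r(1) by (simp add: inner_sum_right)
  then have e1: "inner (a t) r = (\<Sum>x\<in>S. b x * inner (a x) r)"
    by (simp add: inner_diff_left inner_sum_left)
  define M where "M = \<bar>inner (a t) r\<bar>"
  have "M \<le> (\<Sum>x\<in>S. \<bar>b x * inner (a x) r\<bar>)" unfolding M_def e1 by (rule sum_abs)
  also have "\<dots> \<le> (\<Sum>x\<in>S. b x * M)"
    using bp mx unfolding M_def by (intro sum_mono) (simp add: abs_mult mult_left_mono)
  also have "\<dots> = (\<Sum>x\<in>S. b x) * M" by (simp add: sum_distrib_right)
  finally have "M \<le> (\<Sum>x\<in>S. b x) * M" .
  moreover have "0 \<le> M" unfolding M_def by simp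
  ultimately have M0: "M = 0"
  proof -
    assume h: "M \<le> (\<Sum>x\<in>S. b x) * M" "0 \<le> M"
    show "M = 0"
    proof (rule ccontr)
      assume "M \<noteq> 0"
      then have "0 < M" using h by simp
      then have "(\<Sum>x\<in>S. b x) * M < 1 * M" using bs by (intro mult_strict_right_mono)
      then show False using h by simp
    qed
  qed
  then have z: "\<forall>x\<in>S. inner (a x) r = 0" using mx unfolding M_def by (metis abs_le_zero_iff)
  have "inner r r = (\<Sum>x\<in>S. d x * inner (a x) r)"
    by (subst (1) r(1)) (simp add: inner_sum_left)
  also have "\<dots> = 0" using z by simp
  finally show False using r(2) by simp
qed

lemma omp_inv:
  assumes "omp_run a y sel r" "S \<subseteq> Sst" "y = (\<Sum>x\<in>S. c x *\<^sub>R a x)"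
  shows "set sel \<subseteq> S \<and> (\<exists>e. y - r = (\<Sum>x\<in>set sel. e x *\<^sub>R a x)) \<and> (\<exists>d. r = (\<Sum>x\<in>S. d x *\<^sub>R a x))"
  using assms(1)
proof (induction rule: omp_run.induct)
  case init
  then show ?case using assms(3) by auto
next
  case (step sel r \<theta> t c')
  have finS: "finite S" using assms(2) fin_sub by blast
  obtain d where d: "r = (\<Sum>x\<in>S. d x *\<^sub>R a x)" using step.IH by blast
  have "\<theta> \<in> S" using select[OF assms(2) d step.hyps(2) step.hyps(3)] .
  then have sub: "set (sel @ [\<theta>]) \<subseteq> S" using step.IH by auto
  have len: "length (sel @ [\<theta>]) = t" using step.hyps(4) by simp
  obtain e where e: "(\<Sum>l<length (sel @ [\<theta>]). c' l *\<^sub>R a ((sel @ [\<theta>]) ! l)) = (\<Sum>x\<in>set (sel @ [\<theta>]). e x *\<^sub>R a x)"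
    using group_sum[of "set (sel @ [\<theta>])" "sel @ [\<theta>]"] by auto
  obtain e2 where e2: "(\<Sum>l<length (sel @ [\<theta>]). c' l *\<^sub>R a ((sel @ [\<theta>]) ! l)) = (\<Sum>x\<in>S. e2 x *\<^sub>R a x)"
    using group_sum[OF finS sub] by blast
  have "y - (\<Sum>l<t. c' l *\<^sub>R a ((sel @ [\<theta>]) ! l)) = (\<Sum>x\<in>S. (c x - e2 x) *\<^sub>R a x)"
    unfolding len[symmetric] e2 assms(3) by (simp add: scaleR_diff_left sum_subtractf)
  moreover have "y - (y - (\<Sum>l<t. c' l *\<^sub>R a ((sel @ [\<theta>]) ! l))) = (\<Sum>x\<in>set (sel @ [\<theta>]). e x *\<^sub>R a x)"
    unfolding len[symmetric] e by simp
  ultimately show ?case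
    apply (intro conjI)
      apply (rule sub)
     apply (rule exI[of _ e], assumption)
    apply (rule exI, assumption)
    done
qed

end

theorem theorem2:
  fixes a :: "real ^ 'd \<Rightarrow> 'h::{real_inner, complete_space}"
    and k :: nat and ths :: "nat \<Rightarrow> real ^ 'd"
  assumes "admissible_kernel a"
    and "inj_on ths {1..k}"
    and "admissible_support a k ths"
    and "S \<subseteq> ths ` {1..k}"
  shows "omp_exact_recovery a S"
proof -
  interpret omp_ctx a k ths using assms(1-3) by unfold_locales
  have finS: "finite S" using assms(4) fin_sub by blast
  show ?thesis unfolding omp_exact_recovery_def omp_reachable_support_def
  proof (intro allI impI)
    fix c S' assume cnz: "\<forall>\<theta>\<in>S. c \<theta> \<noteq> 0"
      and "\<exists>sel. omp_run a (\<Sum>\<theta>\<in>S. c \<theta> *\<^sub>R a \<theta>) sel 0 \<and> S' = set sel"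
    then obtain sel where run: "omp_run a (\<Sum>\<theta>\<in>S. c \<theta> *\<^sub>R a \<theta>) sel 0" and S': "S' = set sel"
      by blast
    from omp_inv[OF run assms(4) refl] obtain e where
      sub: "set sel \<subseteq> S" and e: "(\<Sum>\<theta>\<in>S. c \<theta> *\<^sub>R a \<theta>) - 0 = (\<Sum>x\<in>set sel. e x *\<^sub>R a x)"
      by blast
    have "S \<subseteq> set sel"
    proof
      fix q assume q: "q \<in> S"
      show "q \<in> set sel"
      proof (rule ccontr)
        assume nq: "q \<notin> set sel"
        define u where "u = (\<lambda>x. c x - (if x \<in> set sel then e x else 0))"
        have "(\<Sum>x\<in>S. (if x \<in> set sel then e x else 0) *\<^sub>R a x) = (\<Sum>x\<in>S. if x \<in> set sel then e x *\<^sub>R a x else 0)"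
          by (intro sum.cong) auto
        also have "\<dots> = (\<Sum>x\<in>S \<inter> set sel. e x *\<^sub>R a x)" by (rule sum.inter_restrict[OF finS, symmetric])
        also have "S \<inter> set sel = set sel" using sub by auto
        finally have "(\<Sum>x\<in>S. u x *\<^sub>R a x) = 0"
          unfolding u_def using e by (simp add: scaleR_diff_left sum_subtractf)
        then have "u q = 0" using indep[OF assms(4) _ q] by blast
        then show False using nq cnz q unfolding u_def by simp
      qed
    qed
    then show "S' = S" using sub S' by auto
  qed
qed



end
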